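(* For all $s\in\mathbb Z_+$ and $\gamma\in[0,1]$, \[ \Big\|\mathrm{diag}\big(Q\,\mathrm{diag}(Q^s)J\big)-\frac{\mathrm{tr}(Q^s)}{N^2}I\Big\|\le\Big\|\frac1N\mathrm{diag}(Q^s)-\frac{\mathrm{tr}(Q^s)}{N^2}I\Big\|\le\min\left\{\frac{4\min_{x\in E}[N-\#\mathcal R^\gamma_Q(x,s)]}{N}+\gamma,\ \frac{2\,\mathrm{tr}(|Q|^s;Q<1)}{N}\right\}. \]
   Context: $E$ is a finite set with $N=\#E>8$ elements, listed in a fixed order; $Q$ is an irreducible stochastic matrix on $E$ with $Q(x,y)=Q(y,x)$ for all $x,y$ and $\mathrm{tr}(Q)=0$. $I$ is the identity, $J$ the matrix with all entries $1/N$, $\mathrm{diag}(C)$ the diagonal matrix with the same diagonal as $C$. $\|C\|=\sum_{x,y\in E}|C(x,y)|$. $\mathcal R^\gamma_Q(x,s)=\{y\in E:|Q^s(x,x)-Q^s(y,y)|\le\gamma\}$. For a function $f$ on $[-1,1]$ and $A\subseteq\mathbb R$, $\mathrm{tr}(f(Q);Q\in A)=\mathrm{tr}(f(Q)\mathbf 1_A(Q))=\sum_{q\in A}f(q)$ over eigenvalues $q$ of $Q$ with multiplicity; in particular $\mathrm{tr}(|Q|^s;Q<1)=\sum_{q<1}|q|^s$. *)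

theory Defs
  imports "Jordan_Normal_Form.Matrix" "Jordan_Normal_Form.Char_Poly"
          "HOL-Computational_Algebra.Polynomial"
begin

text \<open>Matrices on E are N x N real matrices (E = {0..<N} in its fixed order).\<close>

definition mtrace :: "real mat \<Rightarrow> real" where
  "mtrace C = (\<Sum>i<dim_row C. C $$ (i,i))"

definition mdiag :: "real mat \<Rightarrow> real mat" where
  "mdiag C = mat (dim_row C) (dim_col C) (\<lambda>(i,j). if i = j then C $$ (i,i) else 0)"

definition Jmat :: "nat \<Rightarrow> real mat" where
  "Jmat N = mat N N (\<lambda>_. 1 / real N)"

definition entry_norm :: "real mat \<Rightarrow> real" where
  "entry_norm C = (\<Sum>i<dim_row C. \<Sum>j<dim_col C. \<bar>C $$ (i,j)\<bar>)"

definition stochastic :: "nat \<Rightarrow> real mat \<Rightarrow> bool" where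
  "stochastic N Q \<longleftrightarrow> Q \<in> carrier_mat N N \<and>
     (\<forall>i<N. \<forall>j<N. Q $$ (i,j) \<ge> 0) \<and> (\<forall>i<N. (\<Sum>j<N. Q $$ (i,j)) = 1)"

definition irreducible_mat :: "nat \<Rightarrow> real mat \<Rightarrow> bool" where
  "irreducible_mat N Q \<longleftrightarrow> (\<forall>i<N. \<forall>j<N. \<exists>n. (Q ^\<^sub>m n) $$ (i,j) > 0)"

definition Rset :: "nat \<Rightarrow> real mat \<Rightarrow> real \<Rightarrow> nat \<Rightarrow> nat \<Rightarrow> nat set" where
  "Rset N Q \<gamma> x s = {y. y < N \<and> \<bar>(Q ^\<^sub>m s) $$ (x,x) - (Q ^\<^sub>m s) $$ (y,y)\<bar> \<le> \<gamma>}"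

text \<open>Eigenvalues of Q counted with algebraic multiplicity (roots of the characteristic
  polynomial; for symmetric real Q all of them are real).\<close>
definition eigs :: "real mat \<Rightarrow> real multiset" where
  "eigs Q = proots (char_poly Q)"

definition tr_abs_pow_below1 :: "real mat \<Rightarrow> nat \<Rightarrow> real" where
  "tr_abs_pow_below1 Q s = sum_mset (image_mset (\<lambda>q. \<bar>q\<bar> ^ s) (filter_mset (\<lambda>q. q < 1) (eigs Q)))"

end

theory Submission
  imports Defs
begin

lemma real_eigen_exists:
  fixes A :: "real mat"
  assumes A: "A \<in> carrier_mat n n" and sym: "\<forall>i<n. \<forall>j<n. A $$ (i,j) = A $$ (j,i)" and n: "n > 0"
  shows "\<exists>\<mu> (v::real vec). v \<in> carrier_vec n \<and> v \<noteq> 0\<^sub>v n \<and> A *\<^sub>v v = \<mu> \<cdot>\<^sub>v v"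
proof -
  define Ac where "Ac = map_mat complex_of_real A"
  have Ac: "Ac \<in> carrier_mat n n" using A by (simp add: Ac_def)
  obtain as where cp: "char_poly Ac = (\<Prod>a\<leftarrow>as. [:- a, 1:])" and len: "length as = n"
    using char_poly_factorized[OF Ac] by blast
  obtain a rest where as: "as = a # rest" using len n by (cases as) auto
  have "poly (char_poly Ac) a = 0" unfolding cp as by simp
  hence "eigenvalue Ac a" using eigenvalue_root_char_poly[OF Ac] by simp
  then obtain v where ev: "eigenvector Ac v a" unfolding eigenvalue_def by blast
  hence v: "v \<in> carrier_vec n" and v0: "v \<noteq> 0\<^sub>v n" and eq: "Ac *\<^sub>v v = a \<cdot>\<^sub>v v"
    unfolding eigenvector_def using Ac by auto
  have eqi: "(\<Sum>j<n. complex_of_real (A $$ (i,j)) * v $ j) = a * v $ i" if i: "i < n" for i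
  proof -
    have "(Ac *\<^sub>v v) $ i = (a \<cdot>\<^sub>v v) $ i" using eq by simp
    thus ?thesis using i A v Ac unfolding Ac_def
      by (simp add: scalar_prod_def row_def atLeast0LessThan mult.commute)
  qed
  define z where "z = (\<Sum>i<n. \<Sum>j<n. cnj (v $ i) * complex_of_real (A $$ (i,j)) * v $ j)"
  have z1: "z = a * (\<Sum>i<n. cnj (v $ i) * v $ i)"
  proof -
    have "z = (\<Sum>i<n. cnj (v $ i) * (\<Sum>j<n. complex_of_real (A $$ (i,j)) * v $ j))"
      unfolding z_def by (simp add: sum_distrib_left mult.assoc)
    also have "\<dots> = (\<Sum>i<n. cnj (v $ i) * (a * v $ i))" using eqi by simp
    finally show ?thesis by (simp add: sum_distrib_left mult_ac)
  qed
  have "cnj z = (\<Sum>i<n. \<Sum>j<n. v $ i * complex_of_real (A $$ (i,j)) * cnj (v $ j))"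
    unfolding z_def by simp
  also have "\<dots> = (\<Sum>j<n. \<Sum>i<n. v $ i * complex_of_real (A $$ (i,j)) * cnj (v $ j))"
    by (rule sum.swap)
  also have "\<dots> = z" unfolding z_def
    by (intro sum.cong refl, simp add: sym mult_ac)
  finally have "Im z = 0" by (metis Reals_cnj_iff complex_is_Real_iff)
  define r where "r = (\<Sum>i<n. (cmod (v $ i))^2)"
  have r: "(\<Sum>i<n. cnj (v $ i) * v $ i) = complex_of_real r"
    unfolding r_def of_real_sum by (intro sum.cong refl) (subst complex_norm_square, simp add: mult.commute)
  obtain i0 where i0: "i0 < n" "v $ i0 \<noteq> 0"
    using v0 v by (metis dim_vec carrier_vecD eq_vecI index_zero_vec(1) index_zero_vec(2))
  have "r > 0" unfolding r_def
    by (rule sum_pos2[of _ i0]) (use i0 in auto)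
  from \<open>Im z = 0\<close> z1 r have "Im a * r = 0" by simp
  with \<open>r > 0\<close> have Ima: "Im a = 0" by simp
  define \<mu> where "\<mu> = Re a"
  have a: "a = complex_of_real \<mu>" using Ima unfolding \<mu>_def by (simp add: complex_eq_iff)
  define vr where "vr = vec n (\<lambda>i. Re (v $ i))"
  define vi where "vi = vec n (\<lambda>i. Im (v $ i))"
  have rr: "A *\<^sub>v vr = \<mu> \<cdot>\<^sub>v vr"
  proof (rule eq_vecI)
    fix i assume "i < dim_vec (\<mu> \<cdot>\<^sub>v vr)"
    hence i: "i < n" by (simp add: vr_def)
    have "Re (\<Sum>j<n. complex_of_real (A $$ (i,j)) * v $ j) = Re (a * v $ i)" using eqi[OF i] by simp
    thus "(A *\<^sub>v vr) $ i = (\<mu> \<cdot>\<^sub>v vr) $ i" using i A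
      by (simp add: vr_def a scalar_prod_def row_def atLeast0LessThan Re_sum mult.commute)
  qed (use A in \<open>simp add: vr_def\<close>)
  have ii: "A *\<^sub>v vi = \<mu> \<cdot>\<^sub>v vi"
  proof (rule eq_vecI)
    fix i assume "i < dim_vec (\<mu> \<cdot>\<^sub>v vi)"
    hence i: "i < n" by (simp add: vi_def)
    have "Im (\<Sum>j<n. complex_of_real (A $$ (i,j)) * v $ j) = Im (a * v $ i)" using eqi[OF i] by simp
    thus "(A *\<^sub>v vi) $ i = (\<mu> \<cdot>\<^sub>v vi) $ i" using i A
      by (simp add: vi_def a scalar_prod_def row_def atLeast0LessThan Im_sum mult.commute)
  qed (use A in \<open>simp add: vi_def\<close>)
  have "vr \<noteq> 0\<^sub>v n \<or> vi \<noteq> 0\<^sub>v n"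
  proof (rule ccontr)
    assume "\<not> ?thesis"
    hence "vr $ i0 = 0" "vi $ i0 = 0" using i0 by auto
    hence "v $ i0 = 0" using i0 by (simp add: vr_def vi_def complex_eq_iff)
    with i0 show False by simp
  qed
  moreover have "vr \<in> carrier_vec n" "vi \<in> carrier_vec n" by (auto simp: vr_def vi_def)
  ultimately show ?thesis using rr ii by blast
qed

lemma mult_entry:
  fixes X Y :: "'a::comm_semiring_0 mat"
  assumes "X \<in> carrier_mat r n" "Y \<in> carrier_mat n c" "i < r" "j < c"
  shows "(X * Y) $$ (i,j) = (\<Sum>k<n. X $$ (i,k) * Y $$ (k,j))"
  using assms by (simp add: scalar_prod_def row_def col_def atLeast0LessThan)

definition diagm :: "nat \<Rightarrow> (nat \<Rightarrow> real) \<Rightarrow> real mat" where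
  "diagm n lam = mat n n (\<lambda>(i,j). if i = j then lam i else 0)"

lemma diagm_carrier[simp]: "diagm n lam \<in> carrier_mat n n"
  by (simp add: diagm_def)

lemma udu_entry:
  assumes X: "X \<in> carrier_mat n n" and Y: "Y \<in> carrier_mat n n" and i: "i < n" and j: "j < n"
  shows "(X * diagm n lam * transpose_mat Y) $$ (i,j) = (\<Sum>k<n. X $$ (i,k) * lam k * Y $$ (j,k))"
proof -
  have "(X * diagm n lam * transpose_mat Y) $$ (i,j) = (\<Sum>k<n. (X * diagm n lam) $$ (i,k) * transpose_mat Y $$ (k,j))"
    by (rule mult_entry[of _ n n]) (use X Y i j in auto)
  also have "\<dots> = (\<Sum>k<n. X $$ (i,k) * lam k * Y $$ (j,k))"
  proof (intro sum.cong refl)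
    fix k assume k: "k \<in> {..<n}"
    have "(X * diagm n lam) $$ (i,k) = (\<Sum>l<n. X $$ (i,l) * diagm n lam $$ (l,k))"
      by (rule mult_entry[of _ n n]) (use X i k in auto)
    also have "\<dots> = (\<Sum>l<n. if l = k then X $$ (i,k) * lam k else 0)"
      by (intro sum.cong refl) (use k in \<open>auto simp: diagm_def\<close>)
    also have "\<dots> = X $$ (i,k) * lam k" using k by simp
    finally show "(X * diagm n lam) $$ (i,k) * transpose_mat Y $$ (k,j) = X $$ (i,k) * lam k * Y $$ (j,k)"
      using k j Y by simp
  qed
  finally show ?thesis .
qed

lemma householder:
  fixes u :: "nat \<Rightarrow> real"
  assumes n: "n > 0" and u1: "(\<Sum>i<n. (u i)^2) = 1"
  shows "\<exists>H. H \<in> carrier_mat n n \<and> transpose_mat H = H \<and> H * H = 1\<^sub>m n \<and> (\<forall>i<n. H $$ (i,0) = u i)"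
proof -
  define w where "w i = u i - (if i = 0 then 1 else 0)" for i
  define c where "c = (\<Sum>i<n. (w i)^2)"
  define H where "H = mat n n (\<lambda>(i,j). (if i = j then 1 else 0) - 2 / c * w i * w j)"
  have H: "H \<in> carrier_mat n n" by (simp add: H_def)
  have Ht: "transpose_mat H = H" by (rule eq_matI) (auto simp: H_def)
  have c_eq: "c = 2 - 2 * u 0"
  proof -
    have "c = (\<Sum>i<n. (u i)^2 + (if i = 0 then 1 - 2 * u 0 else 0))"
      unfolding c_def w_def by (intro sum.cong refl) (auto simp: power2_eq_square algebra_simps)
    also have "\<dots> = (\<Sum>i<n. (u i)^2) + (\<Sum>i<n. (if i = 0 then 1 - 2 * u 0 else 0))"
      by (rule sum.distrib)
    also have "\<dots> = 1 - 2 * u 0 + 1" using n u1 by simp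
    finally show ?thesis by simp
  qed
  have HH: "H * H = 1\<^sub>m n"
  proof (rule eq_matI)
    fix i j assume "i < dim_row (1\<^sub>m n :: real mat)" "j < dim_col (1\<^sub>m n :: real mat)"
    hence i: "i < n" and j: "j < n" by auto
    have "(H * H) $$ (i,j) = (\<Sum>k<n. H $$ (i,k) * H $$ (k,j))"
      by (rule mult_entry[OF H H i j])
    also have "\<dots> = (\<Sum>k<n. ((if i = k then 1 else 0) - 2 / c * w i * w k) * ((if k = j then 1 else 0) - 2 / c * w k * w j))"
      by (intro sum.cong refl) (use i j in \<open>auto simp: H_def\<close>)
    also have "\<dots> = (\<Sum>k<n. (if i = k \<and> k = j then 1 else 0) - (if k = j then 2 / c * w i * w j else 0)
         - (if i = k then 2 / c * w i * w j else 0) + 4 / c^2 * w i * w j * (w k)^2)"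
      by (intro sum.cong refl) (auto simp: algebra_simps power2_eq_square)
    also have "\<dots> = (if i = j then 1 else 0) - 4 / c * w i * w j + 4 / c^2 * w i * w j * c"
    proof -
      have s1: "(\<Sum>k<n. (if i = k \<and> k = j then 1 else 0::real)) = (if i = j then 1 else 0)"
      proof (cases "i = j")
        case True
        have "(\<Sum>k<n. (if i = k \<and> k = j then 1 else 0::real)) = (\<Sum>k<n. (if k = j then 1 else 0))"
          using True by (intro sum.cong) auto
        thus ?thesis using j True by simp
      next
        case False
        have "(\<Sum>k<n. (if i = k \<and> k = j then 1 else 0::real)) = (\<Sum>k<n. 0)"
          using False by (intro sum.cong) auto
        thus ?thesis using False by simp
      qed
      have s2: "(\<Sum>k<n. (if k = j then 2 / c * w i * w j else 0)) = 2 / c * w i * w j" using j by simp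
      have s3: "(\<Sum>k<n. (if i = k then 2 / c * w i * w j else 0)) = 2 / c * w i * w j" using i by simp
      have s4: "(\<Sum>k<n. 4 / c^2 * w i * w j * (w k)^2) = 4 / c^2 * w i * w j * c"
        unfolding c_def by (simp add: sum_distrib_left)
      show ?thesis unfolding sum.distrib sum_subtractf s1 s2 s3 s4 by simp
    qed
    also have "\<dots> = (if i = j then 1 else 0)"
      by (cases "c = 0") (auto simp: power2_eq_square field_simps)
    finally show "(H * H) $$ (i,j) = 1\<^sub>m n $$ (i,j)" using i j by simp
  qed (use H in auto)
  have col0: "H $$ (i,0) = u i" if i: "i < n" for i
  proof (cases "c = 0")
    case True
    have "\<forall>k\<in>{..<n}. (w k)^2 = 0"
      using True unfolding c_def by (subst sum_nonneg_eq_0_iff[symmetric]) auto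
    hence "w i = 0" using i by auto
    thus ?thesis using i True by (auto simp: H_def w_def split: if_splits)
  next
    case False
    have w0: "w 0 = - c / 2" using c_eq by (simp add: w_def)
    have "H $$ (i,0) = (if i = 0 then 1 else 0) - 2 / c * w i * w 0" using i n by (simp add: H_def)
    also have "\<dots> = (if i = 0 then 1 else 0) + w i" using False by (simp add: w0)
    finally show ?thesis by (simp add: w_def)
  qed
  show ?thesis using H Ht HH col0 by blast
qed

lemma spectral:
  fixes A :: "real mat"
  assumes "A \<in> carrier_mat n n" "\<forall>i<n. \<forall>j<n. A $$ (i,j) = A $$ (j,i)"
  shows "\<exists>U lam. U \<in> carrier_mat n n \<and> transpose_mat U * U = 1\<^sub>m n \<and> U * transpose_mat U = 1\<^sub>m n
            \<and> A = U * diagm n lam * transpose_mat U"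
  using assms
proof (induction n arbitrary: A)
  case 0
  show ?case
    by (rule exI[of _ "1\<^sub>m 0"], rule exI[of _ "\<lambda>_. 0"]) (use 0 in \<open>auto intro!: eq_matI\<close>)
next
  case (Suc m A)
  define n where "n = Suc m"
  have A: "A \<in> carrier_mat n n" and sym: "\<forall>i<n. \<forall>j<n. A $$ (i,j) = A $$ (j,i)"
    using Suc.prems by (auto simp: n_def)
  obtain \<mu> v where v: "v \<in> carrier_vec n" and v0: "v \<noteq> 0\<^sub>v n" and ev: "A *\<^sub>v v = \<mu> \<cdot>\<^sub>v v"
    using real_eigen_exists[OF A sym] by (auto simp: n_def)
  obtain i0 where i0: "i0 < n" "v $ i0 \<noteq> 0"
    using v0 v by (metis carrier_vecD eq_vecI index_zero_vec(1) index_zero_vec(2))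
  define r where "r = (\<Sum>i<n. (v $ i)^2)"
  have rpos: "r > 0" unfolding r_def by (rule sum_pos2[of _ i0]) (use i0 in auto)
  define u where "u = (1 / sqrt r) \<cdot>\<^sub>v v"
  have u: "u \<in> carrier_vec n" using v by (simp add: u_def)
  have u1: "(\<Sum>i<n. (u $ i)^2) = 1"
  proof -
    have "(\<Sum>i<n. (u $ i)^2) = (\<Sum>i<n. (v $ i)^2 / r)"
      using v rpos by (intro sum.cong refl) (auto simp: u_def power_divide)
    also have "\<dots> = 1" using rpos by (simp add: sum_divide_distrib[symmetric] r_def)
    finally show ?thesis .
  qed
  have evu: "A *\<^sub>v u = \<mu> \<cdot>\<^sub>v u" unfolding u_def using A v ev
    by (simp add: mult_mat_vec smult_smult_assoc mult.commute)
  obtain H where H: "H \<in> carrier_mat n n" and Ht: "transpose_mat H = H" and HH: "H * H = 1\<^sub>m n"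
    and Hc: "\<forall>i<n. H $$ (i,0) = u $ i"
    using householder[of n "\<lambda>i. u $ i"] u1 by (auto simp: n_def)
  have colH: "col H 0 = u" by (rule eq_vecI) (use H Hc u in \<open>auto simp: n_def\<close>)
  define B where "B = H * A * H"
  have B: "B \<in> carrier_mat n n" using H A by (simp add: B_def)
  have At: "transpose_mat A = A" by (rule eq_matI) (use A sym in auto)
  have Bt: "transpose_mat B = B"
  proof -
    have "transpose_mat B = transpose_mat H * transpose_mat (H * A)"
      unfolding B_def by (rule transpose_mult[of _ n n]) (use H A in auto)
    also have "transpose_mat (H * A) = transpose_mat A * transpose_mat H"
      by (rule transpose_mult[of _ n n]) (use H A in auto)
    finally show ?thesis unfolding At Ht B_def using H A by simp
  qed
  have B0: "B $$ (i,0) = (if i = 0 then \<mu> else 0)" if i: "i < n" for i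
  proof -
    have n0: "0 < n" by (simp add: n_def)
    have "B $$ (i,0) = row (H * A) i \<bullet> col H 0" unfolding B_def using H A i n0
      by (subst index_mult_mat(1)) auto
    also have "\<dots> = ((H * A) *\<^sub>v u) $ i" using H A i
      by (metis colH index_mult_mat_vec index_mult_mat(2) carrier_matD(1))
    also have "(H * A) *\<^sub>v u = H *\<^sub>v (A *\<^sub>v u)" using H A u by simp
    also have "\<dots> = \<mu> \<cdot>\<^sub>v (H *\<^sub>v u)" using H u by (simp add: evu mult_mat_vec)
    also have "(\<mu> \<cdot>\<^sub>v (H *\<^sub>v u)) $ i = \<mu> * (row H i \<bullet> col H 0)" using H i by (simp add: colH)
    also have "row H i \<bullet> col H 0 = (H * H) $$ (i,0)" using H i n0 by simp
    also have "\<dots> = (if i = 0 then 1 else 0)" using HH i n0 by simp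
    finally show ?thesis by simp
  qed
  have Bs: "B $$ (i,j) = B $$ (j,i)" if "i < n" "j < n" for i j
    using arg_cong[OF Bt, of "\<lambda>M. M $$ (j,i)"] that B by simp
  define A' where "A' = mat m m (\<lambda>(i,j). B $$ (Suc i, Suc j))"
  have A': "A' \<in> carrier_mat m m" by (simp add: A'_def)
  have A's: "\<forall>i<m. \<forall>j<m. A' $$ (i,j) = A' $$ (j,i)" by (auto simp: A'_def Bs n_def)
  obtain U' lam' where U': "U' \<in> carrier_mat m m" and U'1: "transpose_mat U' * U' = 1\<^sub>m m"
    and U'2: "U' * transpose_mat U' = 1\<^sub>m m" and A'eq: "A' = U' * diagm m lam' * transpose_mat U'"
    using Suc.IH[OF A' A's] by blast
  define U1 where "U1 = mat n n (\<lambda>(i,j). if i = 0 then (if j = 0 then 1 else 0)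
                                   else if j = 0 then 0 else U' $$ (i-1, j-1))"
  define lam where "lam k = (if k = 0 then \<mu> else lam' (k-1))" for k
  have U1: "U1 \<in> carrier_mat n n" by (simp add: U1_def)
  have U1e: "U1 $$ (i,j) = (if i = 0 then (if j = 0 then 1 else 0) else if j = 0 then 0 else U' $$ (i-1, j-1))"
    if "i < n" "j < n" for i j using that by (simp add: U1_def)
  have U'1e: "(\<Sum>k<m. U' $$ (k,i) * U' $$ (k,j)) = (if i = j then 1 else 0)" if "i < m" "j < m" for i j
  proof -
    have "(transpose_mat U' * U') $$ (i,j) = (\<Sum>k<m. transpose_mat U' $$ (i,k) * U' $$ (k,j))"
      by (rule mult_entry[of _ m m]) (use U' that in auto)
    thus ?thesis using U'1 U' that by simp
  qed
  have U'2e: "(\<Sum>k<m. U' $$ (i,k) * U' $$ (j,k)) = (if i = j then 1 else 0)" if "i < m" "j < m" for i j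
  proof -
    have "(U' * transpose_mat U') $$ (i,j) = (\<Sum>k<m. U' $$ (i,k) * transpose_mat U' $$ (k,j))"
      by (rule mult_entry[of _ m m]) (use U' that in auto)
    thus ?thesis using U'2 U' that by simp
  qed
  have U11: "transpose_mat U1 * U1 = 1\<^sub>m n"
  proof (rule eq_matI)
    fix i j assume "i < dim_row (1\<^sub>m n :: real mat)" "j < dim_col (1\<^sub>m n :: real mat)"
    hence i: "i < n" and j: "j < n" by auto
    have "(transpose_mat U1 * U1) $$ (i,j) = (\<Sum>k<n. transpose_mat U1 $$ (i,k) * U1 $$ (k,j))"
      by (rule mult_entry[of _ n n]) (use U1 i j in auto)
    also have "\<dots> = (\<Sum>k<n. U1 $$ (k,i) * U1 $$ (k,j))"
      by (intro sum.cong refl) (use U1 i j in auto)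
    also have "\<dots> = U1 $$ (0,i) * U1 $$ (0,j) + (\<Sum>k<m. U1 $$ (Suc k,i) * U1 $$ (Suc k,j))"
      unfolding n_def by (rule sum.lessThan_Suc_shift)
    also have "\<dots> = (if i = j then 1 else 0)"
    proof (cases i)
      case 0 thus ?thesis using i j by (simp add: U1e n_def)
    next
      case (Suc i')
      show ?thesis
      proof (cases j)
        case 0 thus ?thesis using i j Suc by (simp add: U1e n_def)
      next
        case (Suc j')
        have "(\<Sum>k<m. U1 $$ (Suc k,i) * U1 $$ (Suc k,j)) = (\<Sum>k<m. U' $$ (k,i') * U' $$ (k,j'))"
          by (intro sum.cong refl) (use i j \<open>i = Suc i'\<close> Suc in \<open>auto simp: U1e n_def\<close>)
        thus ?thesis using U'1e[of i' j'] i j \<open>i = Suc i'\<close> Suc by (simp add: U1e n_def)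
      qed
    qed
    finally show "(transpose_mat U1 * U1) $$ (i,j) = 1\<^sub>m n $$ (i,j)" using i j by simp
  qed (use U1 in auto)
  have U12: "U1 * transpose_mat U1 = 1\<^sub>m n"
  proof (rule eq_matI)
    fix i j assume "i < dim_row (1\<^sub>m n :: real mat)" "j < dim_col (1\<^sub>m n :: real mat)"
    hence i: "i < n" and j: "j < n" by auto
    have "(U1 * transpose_mat U1) $$ (i,j) = (\<Sum>k<n. U1 $$ (i,k) * transpose_mat U1 $$ (k,j))"
      by (rule mult_entry[of _ n n]) (use U1 i j in auto)
    also have "\<dots> = (\<Sum>k<n. U1 $$ (i,k) * U1 $$ (j,k))"
      by (intro sum.cong refl) (use U1 i j in auto)
    also have "\<dots> = U1 $$ (i,0) * U1 $$ (j,0) + (\<Sum>k<m. U1 $$ (i,Suc k) * U1 $$ (j,Suc k))"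
      unfolding n_def by (rule sum.lessThan_Suc_shift)
    also have "\<dots> = (if i = j then 1 else 0)"
    proof (cases i)
      case 0 thus ?thesis using i j by (simp add: U1e n_def)
    next
      case (Suc i')
      show ?thesis
      proof (cases j)
        case 0 thus ?thesis using i j Suc by (simp add: U1e n_def)
      next
        case (Suc j')
        have "(\<Sum>k<m. U1 $$ (i,Suc k) * U1 $$ (j,Suc k)) = (\<Sum>k<m. U' $$ (i',k) * U' $$ (j',k))"
          by (intro sum.cong refl) (use i j \<open>i = Suc i'\<close> Suc in \<open>auto simp: U1e n_def\<close>)
        thus ?thesis using U'2e[of i' j'] i j \<open>i = Suc i'\<close> Suc by (simp add: U1e n_def)
      qed
    qed
    finally show "(U1 * transpose_mat U1) $$ (i,j) = 1\<^sub>m n $$ (i,j)" using i j by simp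
  qed (use U1 in auto)
  have BU: "B = U1 * diagm n lam * transpose_mat U1"
  proof (rule eq_matI)
    fix i j assume "i < dim_row (U1 * diagm n lam * transpose_mat U1)" "j < dim_col (U1 * diagm n lam * transpose_mat U1)"
    hence i: "i < n" and j: "j < n" using U1 by auto
    have "(U1 * diagm n lam * transpose_mat U1) $$ (i,j) = (\<Sum>k<n. U1 $$ (i,k) * lam k * U1 $$ (j,k))"
      by (rule udu_entry[OF U1 U1 i j])
    also have "\<dots> = U1 $$ (i,0) * lam 0 * U1 $$ (j,0) + (\<Sum>k<m. U1 $$ (i,Suc k) * lam (Suc k) * U1 $$ (j,Suc k))"
      unfolding n_def by (rule sum.lessThan_Suc_shift)
    also have "\<dots> = B $$ (i,j)"
    proof (cases i)
      case 0 thus ?thesis using i j B0[OF j] Bs[OF i j] by (simp add: U1e n_def lam_def)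
    next
      case (Suc i')
      show ?thesis
      proof (cases j)
        case 0 thus ?thesis using i j Suc B0[OF i] by (simp add: U1e n_def lam_def)
      next
        case (Suc j')
        have "(\<Sum>k<m. U1 $$ (i,Suc k) * lam (Suc k) * U1 $$ (j,Suc k)) = (\<Sum>k<m. U' $$ (i',k) * lam' k * U' $$ (j',k))"
          by (intro sum.cong refl) (use i j \<open>i = Suc i'\<close> Suc in \<open>auto simp: U1e n_def lam_def\<close>)
        also have "\<dots> = A' $$ (i',j')" 
          using udu_entry[OF U' U', of i' j' lam'] A'eq i j \<open>i = Suc i'\<close> Suc by (simp add: n_def)
        also have "\<dots> = B $$ (i,j)" using i j \<open>i = Suc i'\<close> Suc by (simp add: A'_def n_def)
        finally show ?thesis using i j \<open>i = Suc i'\<close> Suc by (simp add: U1e n_def)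
      qed
    qed
    finally show "B $$ (i,j) = (U1 * diagm n lam * transpose_mat U1) $$ (i,j)" by simp
  qed (use B U1 in auto)
  define U where "U = H * U1"
  have Uc: "U \<in> carrier_mat n n" using H U1 by (simp add: U_def)
  have UT: "transpose_mat U = transpose_mat U1 * H"
    unfolding U_def using transpose_mult[OF H U1] Ht by simp
  have D: "diagm n lam \<in> carrier_mat n n" by simp
  have "transpose_mat U * U = transpose_mat U1 * (H * H) * U1"
    using H U1 by (subst UT, simp add: U_def assoc_mult_mat[of _ n n _ n _ n])
  hence UU1: "transpose_mat U * U = 1\<^sub>m n" using HH U11 U1 by simp
  have "U * transpose_mat U = H * (U1 * transpose_mat U1) * H"
    using H U1 by (subst UT, simp add: U_def assoc_mult_mat[of _ n n _ n _ n])
  hence UU2: "U * transpose_mat U = 1\<^sub>m n" using HH U12 H by simp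
  have "A = (H * H) * A * (H * H)" using HH A by simp
  also have "\<dots> = H * B * H" unfolding B_def using H A by (simp add: assoc_mult_mat[of _ n n _ n _ n])
  also have "\<dots> = H * (U1 * diagm n lam * transpose_mat U1) * H" using BU by simp
  also have "\<dots> = U * diagm n lam * transpose_mat U"
  proof -
    have U1T: "transpose_mat U1 \<in> carrier_mat n n" using U1 by simp
    have DU: "diagm n lam * transpose_mat U1 \<in> carrier_mat n n" using U1T D by (metis mult_carrier_mat)
    have "H * (U1 * diagm n lam * transpose_mat U1) * H = H * (U1 * (diagm n lam * transpose_mat U1) * H)"
      using H U1 DU by (simp add: assoc_mult_mat[of _ n n _ n _ n])
    also have "U1 * (diagm n lam * transpose_mat U1) * H = U1 * (diagm n lam * (transpose_mat U1 * H))"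
      using H U1 U1T D DU by (simp add: assoc_mult_mat[of _ n n _ n _ n])
    finally have eq: "H * (U1 * diagm n lam * transpose_mat U1) * H = H * (U1 * (diagm n lam * (transpose_mat U1 * H)))" .
    have UH: "transpose_mat U1 * H \<in> carrier_mat n n" using U1T H by (metis mult_carrier_mat)
    have "U * diagm n lam * transpose_mat U = (H * U1) * diagm n lam * (transpose_mat U1 * H)"
      by (subst UT) (simp add: U_def)
    also have "\<dots> = H * (U1 * (diagm n lam * (transpose_mat U1 * H)))"
      using H U1 D UH by (simp add: assoc_mult_mat[of _ n n _ n _ n])
    finally show ?thesis using eq by simp
  qed
  finally have "A = U * diagm n lam * transpose_mat U" .
  thus ?case using Uc UU1 UU2 unfolding n_def by blast
qed

lemma proots_lin_prod: "proots (\<Prod>a\<leftarrow>xs. [:- a, 1:]) = mset (xs :: real list)"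
proof (induction xs)
  case Nil thus ?case by simp
next
  case (Cons x xs)
  have nz: "(\<Prod>a\<leftarrow>xs. [:- a, 1:]) \<noteq> (0::real poly)" by (auto simp: prod_list_zero_iff)
  have nz2: "[:- x, 1:] \<noteq> (0::real poly)" by simp
  have "proots ([:- x, 1:] * (\<Prod>a\<leftarrow>xs. [:- a, 1:])) = proots [:- x, 1:] + proots (\<Prod>a\<leftarrow>xs. [:- a, 1:])"
    by (rule proots_mult) (use nz nz2 in auto)
  moreover have "proots [:- x, 1:] = {#x#}" using proots_linear_factor[of "- x"] by simp
  ultimately show ?case using Cons by simp
qed

lemma eigs_diag:
  fixes Q U :: "real mat"
  assumes Q: "Q \<in> carrier_mat N N" and U: "U \<in> carrier_mat N N"
    and U1: "transpose_mat U * U = 1\<^sub>m N" and U2: "U * transpose_mat U = 1\<^sub>m N"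
    and eq: "Q = U * diagm N lam * transpose_mat U"
  shows "eigs Q = mset (map lam [0..<N])"
proof -
  have "similar_mat_wit Q (diagm N lam) U (transpose_mat U)"
    unfolding similar_mat_wit_def Let_def using Q U U1 U2 eq by auto
  hence "char_poly Q = char_poly (diagm N lam)" by (intro char_poly_similar) (auto simp: similar_mat_def)
  also have "\<dots> = (\<Prod>a\<leftarrow>diag_mat (diagm N lam). [:- a, 1:])"
    by (rule char_poly_upper_triangular[of _ N]) (auto simp: upper_triangular_def diagm_def)
  also have "diag_mat (diagm N lam) = map lam [0..<N]"
    by (simp add: diag_mat_def diagm_def)
  finally have cp: "char_poly Q = (\<Prod>a\<leftarrow>map lam [0..<N]. [:- a, 1:])" .
  show ?thesis unfolding eigs_def cp by (rule proots_lin_prod)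
qed

lemma tr_abs_eq:
  fixes Q :: "real mat"
  assumes "eigs Q = mset (map lam [0..<N])"
  shows "tr_abs_pow_below1 Q s = (\<Sum>k\<in>{k. k < N \<and> lam k < 1}. \<bar>lam k\<bar> ^ s)"
proof -
  have "tr_abs_pow_below1 Q s = sum_list (map (\<lambda>q. \<bar>q\<bar> ^ s) (filter (\<lambda>q. q < 1) (map lam [0..<N])))"
    unfolding tr_abs_pow_below1_def assms by (simp only: mset_filter[symmetric] mset_map[symmetric] sum_mset_sum_list)
  also have "\<dots> = sum_list (map (\<lambda>k. \<bar>lam k\<bar> ^ s) (filter (\<lambda>k. lam k < 1) [0..<N]))"
    by (simp add: filter_map o_def)
  also have "\<dots> = (\<Sum>k\<in>set (filter (\<lambda>k. lam k < 1) [0..<N]). \<bar>lam k\<bar> ^ s)"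
    by (rule sum_list_distinct_conv_sum_set) simp
  also have "set (filter (\<lambda>k. lam k < 1) [0..<N]) = {k. k < N \<and> lam k < 1}" by auto
  finally show ?thesis .
qed

lemma stoch_pow:
  assumes "stochastic N Q"
  shows "stochastic N (Q ^\<^sub>m s)"
proof (induction s)
  case 0
  have Q: "Q \<in> carrier_mat N N" using assms by (simp add: stochastic_def)
  have "(\<Sum>j<N. (1\<^sub>m N :: real mat) $$ (i,j)) = 1" if "i < N" for i
  proof -
    have "(\<Sum>j<N. (1\<^sub>m N :: real mat) $$ (i,j)) = (\<Sum>j<N. if j = i then 1 else 0)"
      by (intro sum.cong) (use that in auto)
    thus ?thesis using that by simp
  qed
  thus ?case using Q by (auto simp: stochastic_def)
next
  case (Suc s)
  have Q: "Q \<in> carrier_mat N N" and Qn: "\<forall>i<N. \<forall>j<N. Q $$ (i,j) \<ge> 0" and Qr: "\<forall>i<N. (\<Sum>j<N. Q $$ (i,j)) = 1"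
    using assms by (auto simp: stochastic_def)
  have P: "Q ^\<^sub>m s \<in> carrier_mat N N" and Pn: "\<forall>i<N. \<forall>j<N. (Q ^\<^sub>m s) $$ (i,j) \<ge> 0"
    and Pr: "\<forall>i<N. (\<Sum>j<N. (Q ^\<^sub>m s) $$ (i,j)) = 1"
    using Suc by (auto simp: stochastic_def)
  have e: "(Q ^\<^sub>m Suc s) $$ (i,j) = (\<Sum>l<N. (Q ^\<^sub>m s) $$ (i,l) * Q $$ (l,j))" if "i < N" "j < N" for i j
    using mult_entry[OF P Q that] by simp
  have "(Q ^\<^sub>m Suc s) $$ (i,j) \<ge> 0" if "i < N" "j < N" for i j
    unfolding e[OF that] using Pn Qn that by (intro sum_nonneg) auto
  moreover have "(\<Sum>j<N. (Q ^\<^sub>m Suc s) $$ (i,j)) = 1" if "i < N" for i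
  proof -
    have "(\<Sum>j<N. (Q ^\<^sub>m Suc s) $$ (i,j)) = (\<Sum>j<N. \<Sum>l<N. (Q ^\<^sub>m s) $$ (i,l) * Q $$ (l,j))"
      using e that by simp
    also have "\<dots> = (\<Sum>l<N. (Q ^\<^sub>m s) $$ (i,l) * (\<Sum>j<N. Q $$ (l,j)))"
      by (subst sum.swap) (simp add: sum_distrib_left)
    also have "\<dots> = 1" using Qr Pr that by simp
    finally show ?thesis .
  qed
  ultimately show ?case using Q by (auto simp: stochastic_def)
qed

lemma fixed_const:
  fixes u :: "nat \<Rightarrow> real"
  assumes st: "stochastic N Q" and irr: "irreducible_mat N Q" and N: "N > 0"
    and fx: "\<forall>i<N. (\<Sum>j<N. Q $$ (i,j) * u j) = u i"
    and i: "i < N" and j: "j < N"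
  shows "u i = u j"
proof -
  have Q: "Q \<in> carrier_mat N N" and Qn: "\<forall>i<N. \<forall>j<N. Q $$ (i,j) \<ge> 0" and Qr: "\<forall>i<N. (\<Sum>j<N. Q $$ (i,j)) = 1"
    using st by (auto simp: stochastic_def)
  define M where "M = Max (u ` {..<N})"
  have uM: "u k \<le> M" if "k < N" for k unfolding M_def using that by (intro Max_ge) auto
  obtain i0 where i0: "i0 < N" "u i0 = M" unfolding M_def using N
    by (metis (mono_tags, lifting) Max_in empty_iff finite_imageI finite_lessThan image_iff image_is_empty lessThan_iff)
  have step: "u l = M" if "k < N" "l < N" "u k = M" "Q $$ (k,l) > 0" for k l
  proof -
    have "(\<Sum>j<N. Q $$ (k,j) * (M - u j)) = M * (\<Sum>j<N. Q $$ (k,j)) - (\<Sum>j<N. Q $$ (k,j) * u j)"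
      by (simp add: algebra_simps sum_subtractf sum_distrib_left)
    also have "\<dots> = 0" using Qr fx that by simp
    finally have s0: "(\<Sum>j<N. Q $$ (k,j) * (M - u j)) = 0" .
    have "\<forall>j\<in>{..<N}. Q $$ (k,j) * (M - u j) = 0"
      using s0 by (subst sum_nonneg_eq_0_iff[symmetric]) (use Qn uM that in auto)
    hence "Q $$ (k,l) * (M - u l) = 0" using that(2) by blast
    thus ?thesis using that by simp
  qed
  have pw: "u l = M" if "l < N" "(Q ^\<^sub>m n) $$ (i0,l) > 0" for n l
    using that
  proof (induction n arbitrary: l)
    case 0 thus ?case using i0 Q by (auto split: if_splits)
  next
    case (Suc n)
    have P: "Q ^\<^sub>m n \<in> carrier_mat N N" using Q by simp
    have Pn: "\<forall>i<N. \<forall>j<N. (Q ^\<^sub>m n) $$ (i,j) \<ge> 0" using stoch_pow[OF st, of n] by (simp add: stochastic_def)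
    have "(Q ^\<^sub>m Suc n) $$ (i0,l) = (\<Sum>k<N. (Q ^\<^sub>m n) $$ (i0,k) * Q $$ (k,l))"
      using mult_entry[OF P Q i0(1) Suc.prems(1)] by simp
    with Suc.prems have "0 < (\<Sum>k<N. (Q ^\<^sub>m n) $$ (i0,k) * Q $$ (k,l))" by simp
    then obtain k where k: "k < N" "(Q ^\<^sub>m n) $$ (i0,k) * Q $$ (k,l) > 0"
      by (metis (no_types, lifting) lessThan_iff not_less sum_nonpos)
    have "(Q ^\<^sub>m n) $$ (i0,k) \<ge> 0" "Q $$ (k,l) \<ge> 0" using Pn Qn k Suc.prems i0 by auto
    with k have "(Q ^\<^sub>m n) $$ (i0,k) > 0" "Q $$ (k,l) > 0"
      by (auto simp: zero_less_mult_iff)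
    with Suc.IH[of k] k have "u k = M" by simp
    thus ?case using step[of k l] k Suc.prems \<open>Q $$ (k,l) > 0\<close> by simp
  qed
  have all: "u l = M" if l: "l < N" for l
  proof -
    obtain n where "(Q ^\<^sub>m n) $$ (i0,l) > 0" using irr i0 l unfolding irreducible_mat_def by blast
    thus ?thesis using pw l by blast
  qed
  show ?thesis using all i j by simp
qed

lemma eig_le1:
  fixes u :: "nat \<Rightarrow> real"
  assumes st: "stochastic N Q"
    and ev: "\<forall>i<N. (\<Sum>j<N. Q $$ (i,j) * u j) = lm * u i"
    and nz: "i1 < N" "u i1 \<noteq> 0"
  shows "\<bar>lm\<bar> \<le> 1"
proof -
  have Qn: "\<forall>i<N. \<forall>j<N. Q $$ (i,j) \<ge> 0" and Qr: "\<forall>i<N. (\<Sum>j<N. Q $$ (i,j)) = 1"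
    using st by (auto simp: stochastic_def)
  define M where "M = Max ((\<lambda>k. \<bar>u k\<bar>) ` {..<N})"
  have uM: "\<bar>u k\<bar> \<le> M" if "k < N" for k unfolding M_def using that by (intro Max_ge) auto
  obtain i where i: "i < N" "\<bar>u i\<bar> = M" unfolding M_def using nz
    by (metis (mono_tags, lifting) Max_in empty_iff finite_imageI finite_lessThan image_iff image_is_empty lessThan_iff)
  have Mpos: "M > 0" using uM[OF nz(1)] nz by simp
  have "\<bar>lm\<bar> * M = \<bar>\<Sum>j<N. Q $$ (i,j) * u j\<bar>" using ev i by (simp add: abs_mult)
  also have "\<dots> \<le> (\<Sum>j<N. \<bar>Q $$ (i,j) * u j\<bar>)" by (rule sum_abs)
  also have "\<dots> \<le> (\<Sum>j<N. Q $$ (i,j) * M)"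
    by (rule sum_mono) (use Qn i uM in \<open>auto simp: abs_mult intro: mult_left_mono\<close>)
  also have "\<dots> = M" using Qr i by (simp add: sum_distrib_right[symmetric])
  finally show ?thesis using Mpos by (simp add: mult_le_cancel_right_pos)
qed

lemma mad_interval:
  fixes e :: "nat \<Rightarrow> real"
  assumes N: "N > 0" and ab: "\<forall>i<N. a \<le> e i \<and> e i \<le> b" and g: "b - a = 2 * \<gamma>" "\<gamma> \<ge> 0"
  shows "(\<Sum>i<N. \<bar>e i - (\<Sum>j<N. e j) / N\<bar>) \<le> N * \<gamma>"
proof -
  define S where "S = (\<Sum>j<N. e j)"
  define m where "m = S / N"
  have Sm: "S = N * m" using N by (simp add: m_def)
  have "N * a \<le> S" unfolding S_def using sum_mono[of "{..<N}" "\<lambda>_. a" e] ab by auto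
  hence am: "a \<le> m" using N Sm by (simp add: mult_le_cancel_left_pos)
  have "S \<le> N * b" unfolding S_def using sum_mono[of "{..<N}" e "\<lambda>_. b"] ab by auto
  hence mb: "m \<le> b" using N Sm by (simp add: mult_le_cancel_left_pos)
  show ?thesis
  proof (cases "\<gamma> = 0")
    case True
    hence "\<forall>i<N. e i = a" using ab g by force
    hence "\<forall>i<N. e i = m" using am mb True g by force
    thus ?thesis using True by (simp add: m_def[symmetric] S_def[symmetric])
  next
    case False
    hence gp: "\<gamma> > 0" using g by simp
    have pt: "(b - a) * \<bar>e i - m\<bar> \<le> (b - e i) * (m - a) + (e i - a) * (b - m)" if i: "i < N" for i
    proof -
      have ai: "a \<le> e i" "e i \<le> b" using ab i by auto
      show ?thesis
      proof (cases "e i \<ge> m")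
        case True
        have h: "(b - e i) * (m - a) + (e i - a) * (b - m) - (b - a) * (e i - m) = 2 * ((b - e i) * (m - a))"
          by (simp add: algebra_simps)
        have z: "(b - e i) * (m - a) \<ge> 0" using ai am by simp
        have ab: "\<bar>e i - m\<bar> = e i - m" using True by simp
        show ?thesis unfolding ab using h z by linarith
      next
        case False
        have h: "(b - e i) * (m - a) + (e i - a) * (b - m) - (b - a) * (m - e i) = 2 * ((e i - a) * (b - m))"
          by (simp add: algebra_simps)
        have z: "(e i - a) * (b - m) \<ge> 0" using ai mb by simp
        have ab: "\<bar>e i - m\<bar> = m - e i" using False by simp
        show ?thesis unfolding ab using h z by linarith
      qed
    qed
    have "(b - a) * (\<Sum>i<N. \<bar>e i - m\<bar>) = (\<Sum>i<N. (b - a) * \<bar>e i - m\<bar>)" by (simp add: sum_distrib_left)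
    also have "\<dots> \<le> (\<Sum>i<N. (b - e i) * (m - a) + (e i - a) * (b - m))" by (rule sum_mono) (use pt in auto)
    also have "\<dots> = (m - a) * (N * b - S) + (b - m) * (S - N * a)"
      by (simp add: S_def sum.distrib algebra_simps sum_distrib_left sum_subtractf)
    also have "\<dots> = 2 * N * ((m - a) * (b - m))" by (simp add: Sm algebra_simps)
    also have "\<dots> \<le> 2 * N * ((b - a)^2 / 4)"
    proof -
      have sq: "(b - a)^2 - 4 * ((m - a) * (b - m)) = (a + b - 2 * m)^2" by (simp add: power2_eq_square algebra_simps)
      have "(a + b - 2 * m)^2 \<ge> 0" by simp
      hence "(m - a) * (b - m) \<le> (b - a)^2 / 4" using sq by linarith
      thus ?thesis using N by (intro mult_left_mono) auto
    qed
    finally have "(b - a) * (\<Sum>i<N. \<bar>e i - m\<bar>) \<le> (b - a) * (N * \<gamma>)" using g by (simp add: power2_eq_square algebra_simps)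
    hence "(\<Sum>i<N. \<bar>e i - m\<bar>) \<le> N * \<gamma>" using g gp by (simp add: mult_le_cancel_left_pos)
    thus ?thesis by (simp add: m_def S_def)
  qed
qed

lemma bound1_abs:
  fixes d :: "nat \<Rightarrow> real"
  assumes N: "N > 0" and d01: "\<forall>i<N. 0 \<le> d i \<and> d i \<le> 1" and x: "x < N" and g: "\<gamma> \<ge> 0"
  defines "R \<equiv> {y. y < N \<and> \<bar>d x - d y\<bar> \<le> \<gamma>}"
  shows "(\<Sum>i<N. \<bar>d i - (\<Sum>j<N. d j) / N\<bar>) \<le> 2 * (real N - card R) + N * \<gamma>"
proof -
  define a where "a = d x - \<gamma>"
  define b where "b = d x + \<gamma>"
  define e where "e i = max a (min b (d i))" for i
  have RN: "R \<subseteq> {..<N}" by (auto simp: R_def)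
  have cR: "card ({..<N} - R) = N - card R" using RN by (simp add: card_Diff_subset finite_subset)
  have cRle: "card R \<le> N" using card_mono[OF _ RN] by simp
  have de: "\<bar>d i - e i\<bar> \<le> (if i \<in> R then 0 else 1)" if i: "i < N" for i
  proof -
    have h: "0 \<le> d x" "d x \<le> 1" "0 \<le> d i" "d i \<le> 1" using d01 x i by auto
    have ab: "a \<le> b" using g by (simp add: a_def b_def)
    show ?thesis
    proof (cases "i \<in> R")
      case True
      hence "a \<le> d i" "d i \<le> b" unfolding R_def a_def b_def by auto
      hence "e i = d i" unfolding e_def by simp
      thus ?thesis using True by simp
    next
      case False
      have "\<bar>d i - e i\<bar> \<le> 1"
      proof (cases "d i \<le> b")
        case True
        show ?thesis
        proof (cases "a \<le> d i")
          case True
          hence "e i = d i" unfolding e_def using \<open>d i \<le> b\<close> by simp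
          thus ?thesis by simp
        next
          case False
          hence "e i = a" unfolding e_def using \<open>d i \<le> b\<close> by simp
          thus ?thesis using False h g unfolding a_def by simp
        qed
      next
        case False
        hence "e i = b" unfolding e_def using ab by simp
        thus ?thesis using False h g unfolding b_def by simp
      qed
      thus ?thesis using False by simp
    qed
  qed
  have sde: "(\<Sum>i<N. \<bar>d i - e i\<bar>) \<le> real N - card R"
  proof -
    have "(\<Sum>i<N. \<bar>d i - e i\<bar>) \<le> (\<Sum>i<N. (if i \<in> R then 0 else 1))" by (rule sum_mono) (use de in auto)
    also have "\<dots> = card ({..<N} - R)" by (simp add: sum.If_cases Diff_eq)
    also have "\<dots> = real N - card R" using cR cRle by simp
    finally show ?thesis .
  qed
  have ee: "(\<Sum>i<N. \<bar>e i - (\<Sum>j<N. e j) / N\<bar>) \<le> N * \<gamma>"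
    by (rule mad_interval[OF N _ _ g, where a=a and b=b]) (use g in \<open>auto simp: e_def a_def b_def\<close>)
  define m where "m = (\<Sum>j<N. d j) / N"
  define m' where "m' = (\<Sum>j<N. e j) / N"
  have "N * (m' - m) = (\<Sum>j<N. e j) - (\<Sum>j<N. d j)" using N by (simp add: m_def m'_def field_simps)
  moreover have "N * \<bar>m' - m\<bar> = \<bar>N * (m' - m)\<bar>" by (simp add: abs_mult)
  ultimately have "N * \<bar>m' - m\<bar> = \<bar>(\<Sum>j<N. e j - d j)\<bar>" by (simp add: sum_subtractf)
  also have "\<dots> \<le> (\<Sum>i<N. \<bar>d i - e i\<bar>)" by (rule order_trans[OF sum_abs]) (simp add: abs_minus_commute)
  finally have mm: "N * \<bar>m' - m\<bar> \<le> real N - card R" using sde by linarith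
  have "(\<Sum>i<N. \<bar>d i - m\<bar>) \<le> (\<Sum>i<N. \<bar>d i - e i\<bar> + \<bar>e i - m'\<bar> + \<bar>m' - m\<bar>)"
    by (rule sum_mono) linarith
  also have "\<dots> = (\<Sum>i<N. \<bar>d i - e i\<bar>) + (\<Sum>i<N. \<bar>e i - m'\<bar>) + N * \<bar>m' - m\<bar>"
    by (simp add: sum.distrib)
  also have "\<dots> \<le> (real N - card R) + N * \<gamma> + (real N - card R)"
    using sde ee mm unfolding m'_def by linarith
  finally show ?thesis unfolding m_def by argo
qed

lemma bound2:
  fixes Q :: "real mat"
  assumes N: "N > 0" and st: "stochastic N Q" and irr: "irreducible_mat N Q"
    and sym: "\<forall>i<N. \<forall>j<N. Q $$ (i,j) = Q $$ (j,i)"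
  shows "(\<Sum>i<N. \<bar>(Q ^\<^sub>m s) $$ (i,i) - mtrace (Q ^\<^sub>m s) / N\<bar>) \<le> 2 * tr_abs_pow_below1 Q s"
proof -
  have Q: "Q \<in> carrier_mat N N" and Qr: "\<forall>i<N. (\<Sum>j<N. Q $$ (i,j)) = 1"
    using st by (auto simp: stochastic_def)
  have Qc: "(\<Sum>i<N. Q $$ (i,j)) = 1" if "j < N" for j
    using Qr that sym by (metis (no_types, lifting) lessThan_iff sum.cong)
  obtain U lam where U: "U \<in> carrier_mat N N" and U1: "transpose_mat U * U = 1\<^sub>m N"
    and U2: "U * transpose_mat U = 1\<^sub>m N" and Qeq: "Q = U * diagm N lam * transpose_mat U"
    using spectral[OF Q sym] by blast
  have Ue1: "(\<Sum>i<N. U $$ (i,k) * U $$ (i,l)) = (if k = l then 1 else 0)" if "k < N" "l < N" for k l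
  proof -
    have "(transpose_mat U * U) $$ (k,l) = (\<Sum>i<N. transpose_mat U $$ (k,i) * U $$ (i,l))"
      by (rule mult_entry[of _ N N]) (use U that in auto)
    thus ?thesis using U1 U that by simp
  qed
  have Ue2: "(\<Sum>k<N. U $$ (i,k) * U $$ (j,k)) = (if i = j then 1 else 0)" if "i < N" "j < N" for i j
  proof -
    have "(U * transpose_mat U) $$ (i,j) = (\<Sum>k<N. U $$ (i,k) * transpose_mat U $$ (k,j))"
      by (rule mult_entry[of _ N N]) (use U that in auto)
    thus ?thesis using U2 U that by simp
  qed
  have Qe: "Q $$ (i,j) = (\<Sum>k<N. U $$ (i,k) * lam k * U $$ (j,k))" if "i < N" "j < N" for i j
    using udu_entry[OF U U that, of lam] Qeq by simp
  have EV: "(\<Sum>j<N. Q $$ (i,j) * U $$ (j,k)) = lam k * U $$ (i,k)" if i: "i < N" and k: "k < N" for i k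
  proof -
    have "(\<Sum>j<N. Q $$ (i,j) * U $$ (j,k)) = (\<Sum>j<N. \<Sum>l<N. U $$ (i,l) * lam l * (U $$ (j,l) * U $$ (j,k)))"
      using Qe i by (simp add: sum_distrib_right mult.assoc)
    also have "\<dots> = (\<Sum>l<N. U $$ (i,l) * lam l * (\<Sum>j<N. U $$ (j,l) * U $$ (j,k)))"
      by (subst sum.swap) (simp add: sum_distrib_left)
    also have "\<dots> = (\<Sum>l<N. if l = k then U $$ (i,l) * lam l else 0)"
      by (intro sum.cong refl) (use Ue1 k in auto)
    also have "\<dots> = lam k * U $$ (i,k)" using k by simp
    finally show ?thesis .
  qed
  have pow: "(Q ^\<^sub>m n) $$ (i,j) = (\<Sum>k<N. U $$ (i,k) * lam k ^ n * U $$ (j,k))" if "i < N" "j < N" for n i j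
    using that
  proof (induction n arbitrary: j)
    case 0 thus ?case using Ue2 Q by simp
  next
    case (Suc n)
    have "(Q ^\<^sub>m Suc n) $$ (i,j) = (\<Sum>l<N. (Q ^\<^sub>m n) $$ (i,l) * Q $$ (l,j))"
      using mult_entry[of "Q ^\<^sub>m n" N N Q N i j] Q Suc.prems by simp
    also have "\<dots> = (\<Sum>l<N. \<Sum>k<N. U $$ (i,k) * lam k ^ n * (Q $$ (j,l) * U $$ (l,k)))"
    proof (intro sum.cong refl)
      fix l assume l: "l \<in> {..<N}"
      have "(Q ^\<^sub>m n) $$ (i,l) * Q $$ (l,j) = (\<Sum>k<N. U $$ (i,k) * lam k ^ n * U $$ (l,k)) * Q $$ (j,l)"
        using Suc.IH[of l] l Suc.prems sym by simp
      also have "\<dots> = (\<Sum>k<N. U $$ (i,k) * lam k ^ n * (Q $$ (j,l) * U $$ (l,k)))"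
        by (simp add: sum_distrib_right sum_distrib_left mult_ac)
      finally show "(Q ^\<^sub>m n) $$ (i,l) * Q $$ (l,j) = (\<Sum>k<N. U $$ (i,k) * lam k ^ n * (Q $$ (j,l) * U $$ (l,k)))" .
    qed
    also have "\<dots> = (\<Sum>k<N. U $$ (i,k) * lam k ^ n * (\<Sum>l<N. Q $$ (j,l) * U $$ (l,k)))"
      by (subst sum.swap) (simp add: sum_distrib_left)
    also have "\<dots> = (\<Sum>k<N. U $$ (i,k) * lam k ^ Suc n * U $$ (j,k))"
      by (intro sum.cong refl) (use EV Suc.prems in auto)
    finally show ?case .
  qed
  define d where "d i = (Q ^\<^sub>m s) $$ (i,i)" for i
  define t where "t = mtrace (Q ^\<^sub>m s)"
  have de: "d i = (\<Sum>k<N. (U $$ (i,k))^2 * lam k ^ s)" if "i < N" for i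
    unfolding d_def using pow[OF that that] by (simp add: power2_eq_square mult_ac)
  have col1: "(\<Sum>i<N. (U $$ (i,k))^2) = 1" if "k < N" for k
    using Ue1[OF that that] by (simp add: power2_eq_square)
  have tsum: "t = (\<Sum>k<N. lam k ^ s)"
  proof -
    have "t = (\<Sum>i<N. d i)" unfolding t_def mtrace_def d_def using Q by simp
    also have "\<dots> = (\<Sum>i<N. \<Sum>k<N. (U $$ (i,k))^2 * lam k ^ s)" using de by simp
    also have "\<dots> = (\<Sum>k<N. lam k ^ s * (\<Sum>i<N. (U $$ (i,k))^2))"
      by (subst sum.swap) (simp add: sum_distrib_left mult_ac)
    also have "\<dots> = (\<Sum>k<N. lam k ^ s)" using col1 by simp
    finally show ?thesis .
  qed
  define w where "w k = (\<Sum>i<N. U $$ (i,k))" for k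
  have lw: "lam k * w k = w k" if k: "k < N" for k
  proof -
    have "lam k * w k = (\<Sum>i<N. lam k * U $$ (i,k))" unfolding w_def by (simp add: sum_distrib_left)
    also have "\<dots> = (\<Sum>i<N. \<Sum>j<N. Q $$ (i,j) * U $$ (j,k))" using EV k by simp
    also have "\<dots> = (\<Sum>j<N. U $$ (j,k) * (\<Sum>i<N. Q $$ (i,j)))"
      by (subst sum.swap) (simp add: sum_distrib_left mult_ac)
    also have "\<dots> = w k" unfolding w_def using Qc by simp
    finally show ?thesis .
  qed
  have "(\<Sum>k<N. w k * U $$ (0,k)) = 1"
  proof -
    have "(\<Sum>k<N. w k * U $$ (0,k)) = (\<Sum>i<N. \<Sum>k<N. U $$ (i,k) * U $$ (0,k))"
      unfolding w_def by (subst sum.swap) (simp add: sum_distrib_right)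
    also have "\<dots> = (\<Sum>i<N. if i = 0 then 1 else 0)" using Ue2 N by simp
    also have "\<dots> = 1" using N by simp
    finally show ?thesis .
  qed
  hence "\<exists>k0<N. w k0 \<noteq> 0"
  proof (rule contrapos_pp)
    assume "\<not> (\<exists>k0<N. w k0 \<noteq> 0)"
    hence "(\<Sum>k<N. w k * U $$ (0,k)) = 0" by simp
    thus "(\<Sum>k<N. w k * U $$ (0,k)) \<noteq> 1" by simp
  qed
  then obtain k0 where k0: "k0 < N" "w k0 \<noteq> 0" by blast
  have lk0: "lam k0 = 1" using lw[OF k0(1)] k0(2) by simp
  have const: "U $$ (i,k) = U $$ (0,k)" if "lam k = 1" "k < N" "i < N" for i k
    using fixed_const[OF st irr N, of "\<lambda>j. U $$ (j,k)" i 0] EV that N by simp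
  have csq: "N * (U $$ (0,k))^2 = 1" if "lam k = 1" "k < N" for k
  proof -
    have "(\<Sum>i<N. (U $$ (i,k))^2) = (\<Sum>i<N. (U $$ (0,k))^2)"
      by (rule sum.cong[OF refl]) (metis const[OF that] lessThan_iff)
    thus ?thesis using col1[OF that(2)] by simp
  qed
  have uniq: "k = k0" if "lam k = 1" "k < N" for k
  proof (rule ccontr)
    assume ne: "k \<noteq> k0"
    have "(\<Sum>i<N. U $$ (i,k) * U $$ (i,k0)) = (\<Sum>i<N. U $$ (0,k) * U $$ (0,k0))"
      by (rule sum.cong[OF refl]) (metis const[OF that] const[OF lk0 k0(1)] lessThan_iff)
    hence "N * (U $$ (0,k) * U $$ (0,k0)) = 0" using Ue1[OF that(2) k0(1)] ne by simp
    moreover have "U $$ (0,k) \<noteq> 0" "U $$ (0,k0) \<noteq> 0" using csq[OF that] csq[OF lk0 k0(1)] by auto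
    ultimately show False using N by simp
  qed
  have le1: "\<bar>lam k\<bar> \<le> 1" if k: "k < N" for k
  proof -
    have "\<exists>i1<N. U $$ (i1,k) \<noteq> 0"
    proof (rule ccontr)
      assume "\<not> (\<exists>i1<N. U $$ (i1,k) \<noteq> 0)"
      hence "(\<Sum>i<N. (U $$ (i,k))^2) = 0" by simp
      thus False using col1[OF k] by simp
    qed
    then obtain i1 where i1: "i1 < N" "U $$ (i1,k) \<noteq> 0" by blast
    show ?thesis by (rule eig_le1[where u="\<lambda>j. U $$ (j,k)", OF st _ i1]) (use EV k in auto)
  qed
  define K where "K = {..<N} - {k0}"
  have Kset: "{k. k < N \<and> lam k < 1} = K"
  proof
    show "{k. k < N \<and> lam k < 1} \<subseteq> K" using lk0 unfolding K_def by auto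
    show "K \<subseteq> {k. k < N \<and> lam k < 1}"
    proof
      fix k assume "k \<in> K"
      hence k: "k < N" "k \<noteq> k0" unfolding K_def by auto
      have "lam k \<noteq> 1" using uniq k by blast
      moreover have "lam k \<le> 1" using le1[OF k(1)] by (simp add: abs_le_iff)
      ultimately show "k \<in> {k. k < N \<and> lam k < 1}" using k by simp
    qed
  qed
  define T where "T = (\<Sum>k\<in>K. \<bar>lam k\<bar> ^ s)"
  have Teq: "tr_abs_pow_below1 Q s = T"
    unfolding T_def Kset[symmetric] by (rule tr_abs_eq[OF eigs_diag[OF Q U U1 U2 Qeq]])
  have sK: "(\<Sum>k<N. f k) = f k0 + (\<Sum>k\<in>K. f k)" for f :: "nat \<Rightarrow> real"
    unfolding K_def using k0 by (simp add: sum.remove)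
  have d1: "d i - 1 / N = (\<Sum>k\<in>K. (U $$ (i,k))^2 * lam k ^ s)" if i: "i < N" for i
  proof -
    have "(U $$ (i,k0))^2 = 1 / N" using csq[OF lk0 k0(1)] const[OF lk0 k0(1) i] N by (simp add: field_simps)
    thus ?thesis using de[OF i] sK lk0 by simp
  qed
  have t1: "t - 1 = (\<Sum>k\<in>K. lam k ^ s)" using tsum sK lk0 by simp
  have A1: "(\<Sum>i<N. \<bar>d i - 1 / N\<bar>) \<le> T"
  proof -
    have "(\<Sum>i<N. \<bar>d i - 1 / N\<bar>) \<le> (\<Sum>i<N. \<Sum>k\<in>K. (U $$ (i,k))^2 * \<bar>lam k\<bar> ^ s)"
    proof (rule sum_mono)
      fix i assume "i \<in> {..<N}"
      hence "\<bar>d i - 1 / N\<bar> = \<bar>\<Sum>k\<in>K. (U $$ (i,k))^2 * lam k ^ s\<bar>" using d1 by simp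
      also have "\<dots> \<le> (\<Sum>k\<in>K. \<bar>(U $$ (i,k))^2 * lam k ^ s\<bar>)" by (rule sum_abs)
      also have "\<dots> = (\<Sum>k\<in>K. (U $$ (i,k))^2 * \<bar>lam k\<bar> ^ s)" by (simp add: abs_mult power_abs)
      finally show "\<bar>d i - 1 / N\<bar> \<le> (\<Sum>k\<in>K. (U $$ (i,k))^2 * \<bar>lam k\<bar> ^ s)" .
    qed
    also have "\<dots> = (\<Sum>k\<in>K. \<bar>lam k\<bar> ^ s * (\<Sum>i<N. (U $$ (i,k))^2))"
      by (subst sum.swap) (simp add: sum_distrib_left mult_ac)
    also have "\<dots> = T" unfolding T_def using col1 by (intro sum.cong) (auto simp: K_def)
    finally show ?thesis .
  qed
  have A2: "\<bar>t - 1\<bar> \<le> T" unfolding t1 T_def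
    by (rule order_trans[OF sum_abs]) (simp add: power_abs)
  have "(\<Sum>i<N. \<bar>d i - t / N\<bar>) \<le> (\<Sum>i<N. \<bar>d i - 1 / N\<bar> + \<bar>t - 1\<bar> / N)"
  proof (rule sum_mono)
    fix i assume "i \<in> {..<N}"
    have "\<bar>1 / N - t / N\<bar> = \<bar>t - 1\<bar> / N" using N by (simp add: abs_minus_commute diff_divide_distrib[symmetric])
    thus "\<bar>d i - t / N\<bar> \<le> \<bar>d i - 1 / N\<bar> + \<bar>t - 1\<bar> / N" by linarith
  qed
  also have "\<dots> = (\<Sum>i<N. \<bar>d i - 1 / N\<bar>) + \<bar>t - 1\<bar>" using N by (simp add: sum.distrib)
  also have "\<dots> \<le> 2 * T" using A1 A2 by linarith
  finally show ?thesis unfolding Teq d_def t_def .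
qed

lemma diag_norm:
  assumes M: "M \<in> carrier_mat N N" and off: "\<forall>i<N. \<forall>j<N. i \<noteq> j \<longrightarrow> M $$ (i,j) = 0"
  shows "entry_norm M = (\<Sum>i<N. \<bar>M $$ (i,i)\<bar>)"
proof -
  have "entry_norm M = (\<Sum>i<N. \<Sum>j<N. \<bar>M $$ (i,j)\<bar>)" using M by (simp add: entry_norm_def)
  also have "\<dots> = (\<Sum>i<N. \<Sum>j<N. if j = i then \<bar>M $$ (i,i)\<bar> else 0)"
    by (intro sum.cong refl) (use off in auto)
  also have "\<dots> = (\<Sum>i<N. \<bar>M $$ (i,i)\<bar>)" by simp
  finally show ?thesis .
qed

lemma mdiag_carrier: "X \<in> carrier_mat a b \<Longrightarrow> mdiag X \<in> carrier_mat a b"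
  unfolding mdiag_def carrier_mat_def by simp

lemma mdiag_index: "X \<in> carrier_mat a b \<Longrightarrow> i < a \<Longrightarrow> j < b \<Longrightarrow>
   mdiag X $$ (i,j) = (if i = j then X $$ (i,i) else 0)"
  unfolding mdiag_def carrier_mat_def by simp

theorem lemma4p8:
  fixes N :: nat and Q :: "real mat" and s :: nat and \<gamma> :: real
  assumes "N > 8"
    and "stochastic N Q"
    and "irreducible_mat N Q"
    and "\<forall>i<N. \<forall>j<N. Q $$ (i,j) = Q $$ (j,i)"
    and "mtrace Q = 0"
    and "s \<ge> 1"
    and "0 \<le> \<gamma>" and "\<gamma> \<le> 1"
  shows "entry_norm (mdiag (Q * mdiag (Q ^\<^sub>m s) * Jmat N) - (mtrace (Q ^\<^sub>m s) / real N ^ 2) \<cdot>\<^sub>m 1\<^sub>m N)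
           \<le> entry_norm ((1 / real N) \<cdot>\<^sub>m mdiag (Q ^\<^sub>m s) - (mtrace (Q ^\<^sub>m s) / real N ^ 2) \<cdot>\<^sub>m 1\<^sub>m N)
         \<and> entry_norm ((1 / real N) \<cdot>\<^sub>m mdiag (Q ^\<^sub>m s) - (mtrace (Q ^\<^sub>m s) / real N ^ 2) \<cdot>\<^sub>m 1\<^sub>m N)
           \<le> min (4 * real (Min ((\<lambda>x. N - card (Rset N Q \<gamma> x s)) ` {..<N})) / real N + \<gamma>)
                  (2 * tr_abs_pow_below1 Q s / real N)"
proof -
  note st = assms(2) and irr = assms(3) and sym = assms(4) and g = assms(7)
  have N: "N > 0" using assms(1) by simp
  have Q: "Q \<in> carrier_mat N N" and Qn: "\<forall>i<N. \<forall>j<N. Q $$ (i,j) \<ge> 0"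
    and Qr: "\<forall>i<N. (\<Sum>j<N. Q $$ (i,j)) = 1"
    using st by (auto simp: stochastic_def)
  have Qc: "(\<Sum>i<N. Q $$ (i,j)) = 1" if "j < N" for j
    using Qr that sym by (metis (no_types, lifting) lessThan_iff sum.cong)
  define P where "P = Q ^\<^sub>m s"
  have P: "P \<in> carrier_mat N N" using Q by (simp add: P_def)
  have Pn: "\<forall>i<N. \<forall>j<N. P $$ (i,j) \<ge> 0" and Pr: "\<forall>i<N. (\<Sum>j<N. P $$ (i,j)) = 1"
    using stoch_pow[OF st, of s] by (auto simp: stochastic_def P_def)
  define d where "d i = P $$ (i,i)" for i
  define t where "t = mtrace P"
  define c where "c = t / real N ^ 2"
  have d01: "\<forall>i<N. 0 \<le> d i \<and> d i \<le> 1"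
  proof (intro allI impI conjI)
    fix i assume i: "i < N"
    show "0 \<le> d i" using Pn i by (simp add: d_def)
    have "P $$ (i,i) \<le> (\<Sum>j<N. P $$ (i,j))"
      by (rule member_le_sum[of i "{..<N}" "\<lambda>j. P $$ (i,j)"]) (use Pn i in auto)
    thus "d i \<le> 1" using Pr i by (simp add: d_def)
  qed
  have tsum: "t = (\<Sum>i<N. d i)" using P by (simp add: t_def mtrace_def d_def)
  define M1 where "M1 = mdiag (Q * mdiag P * Jmat N) - c \<cdot>\<^sub>m 1\<^sub>m N"
  define M2 where "M2 = (1 / real N) \<cdot>\<^sub>m mdiag P - c \<cdot>\<^sub>m 1\<^sub>m N"
  have mdP: "mdiag P \<in> carrier_mat N N" using P by (rule mdiag_carrier)
  have J: "Jmat N \<in> carrier_mat N N" by (simp add: Jmat_def)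
  have QPJ: "Q * mdiag P * Jmat N \<in> carrier_mat N N" using Q mdP J by simp
  have M1c: "M1 \<in> carrier_mat N N" unfolding M1_def
    by (rule minus_carrier_mat) (use mdiag_carrier[OF QPJ] in auto)
  have M2c: "M2 \<in> carrier_mat N N" unfolding M2_def
    by (rule minus_carrier_mat) (use mdP in auto)
  have QP: "(Q * mdiag P) $$ (i,k) = Q $$ (i,k) * d k" if "i < N" "k < N" for i k
  proof -
    have "(Q * mdiag P) $$ (i,k) = (\<Sum>l<N. Q $$ (i,l) * mdiag P $$ (l,k))"
      by (rule mult_entry[OF Q mdP that])
    also have "\<dots> = (\<Sum>l<N. if l = k then Q $$ (i,k) * d k else 0)"
      by (intro sum.cong refl) (use P that in \<open>auto simp: mdiag_def d_def\<close>)
    finally show ?thesis using that by simp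
  qed
  have QPJe: "(Q * mdiag P * Jmat N) $$ (i,i) = (\<Sum>k<N. Q $$ (i,k) * d k) / N" if i: "i < N" for i
  proof -
    have "(Q * mdiag P * Jmat N) $$ (i,i) = (\<Sum>k<N. (Q * mdiag P) $$ (i,k) * Jmat N $$ (k,i))"
      by (rule mult_entry[of _ N N]) (use Q mdP J i in auto)
    also have "\<dots> = (\<Sum>k<N. Q $$ (i,k) * d k / N)"
      by (intro sum.cong refl) (use QP i in \<open>auto simp: Jmat_def\<close>)
    finally show ?thesis by (simp add: sum_divide_distrib)
  qed
  have M1e: "M1 $$ (i,j) = (if i = j then (\<Sum>k<N. Q $$ (i,k) * d k) / N - c else 0)" if "i < N" "j < N" for i j
    using that QPJe mdiag_index[OF QPJ that] by (simp add: M1_def)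
  have M2e: "M2 $$ (i,j) = (if i = j then d i / N - c else 0)" if "i < N" "j < N" for i j
    using that mdiag_index[OF P that] carrier_matD[OF mdP] by (simp add: M2_def d_def)
  have n1: "entry_norm M1 = (\<Sum>i<N. \<bar>(\<Sum>k<N. Q $$ (i,k) * d k) / N - c\<bar>)"
    using diag_norm[OF M1c] M1e by simp
  have n2: "entry_norm M2 = (\<Sum>i<N. \<bar>d i / N - c\<bar>)"
    using diag_norm[OF M2c] M2e by simp
  have part1: "entry_norm M1 \<le> entry_norm M2"
  proof -
    have "\<bar>(\<Sum>k<N. Q $$ (i,k) * d k) / N - c\<bar> \<le> (\<Sum>k<N. Q $$ (i,k) * \<bar>d k / N - c\<bar>)" if i: "i < N" for i
    proof -
      have "(\<Sum>k<N. Q $$ (i,k) * d k) / N - c = (\<Sum>k<N. Q $$ (i,k) * (d k / N - c))"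
      proof -
        have cc: "(\<Sum>k<N. c * Q $$ (i, k)) = c" using Qr i by (simp add: sum_distrib_left[symmetric])
        show ?thesis using cc by (simp add: algebra_simps sum_subtractf sum_distrib_right sum_divide_distrib)
      qed
      also have "\<bar>\<dots>\<bar> \<le> (\<Sum>k<N. \<bar>Q $$ (i,k) * (d k / N - c)\<bar>)" by (rule sum_abs)
      also have "\<dots> = (\<Sum>k<N. Q $$ (i,k) * \<bar>d k / N - c\<bar>)"
        by (intro sum.cong refl) (use Qn i in \<open>auto simp: abs_mult\<close>)
      finally show ?thesis .
    qed
    hence "entry_norm M1 \<le> (\<Sum>i<N. \<Sum>k<N. Q $$ (i,k) * \<bar>d k / N - c\<bar>)"
      unfolding n1 by (intro sum_mono) auto
    also have "\<dots> = (\<Sum>k<N. (\<Sum>i<N. Q $$ (i,k)) * \<bar>d k / N - c\<bar>)"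
      by (subst sum.swap) (simp add: sum_distrib_right)
    also have "\<dots> = entry_norm M2" unfolding n2 using Qc by simp
    finally show ?thesis .
  qed
  have resc: "entry_norm M2 = (\<Sum>i<N. \<bar>d i - t / N\<bar>) / N"
  proof -
    have "\<bar>d i / N - c\<bar> = \<bar>d i - t / N\<bar> / N" for i
    proof -
      have "d i / N - c = (d i - t / N) / N" using N by (simp add: c_def field_simps power2_eq_square)
      thus ?thesis using N by simp
    qed
    thus ?thesis unfolding n2 by (simp add: sum_divide_distrib)
  qed
  have b2: "entry_norm M2 \<le> 2 * tr_abs_pow_below1 Q s / N"
    using bound2[OF N st irr sym, of s] N unfolding resc
    by (simp add: divide_right_mono d_def t_def P_def)
  define f where "f x = N - card (Rset N Q \<gamma> x s)" for x
  obtain x0 where x0: "x0 < N" "Min (f ` {..<N}) = f x0"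
    using N by (metis (no_types, lifting) Min_in empty_iff finite_imageI finite_lessThan image_iff image_is_empty lessThan_iff)
  define R where "R = {y. y < N \<and> \<bar>d x0 - d y\<bar> \<le> \<gamma>}"
  have RR: "Rset N Q \<gamma> x0 s = R" by (simp add: Rset_def R_def d_def P_def)
  have cR: "card R \<le> N" using card_mono[of "{..<N}" R] by (auto simp: R_def)
  have "(\<Sum>i<N. \<bar>d i - t / N\<bar>) \<le> 2 * (real N - card R) + N * \<gamma>"
    using bound1_abs[OF N d01 x0(1) g] unfolding tsum R_def by simp
  hence "entry_norm M2 \<le> (2 * (real N - card R) + N * \<gamma>) / N"
    unfolding resc using N by (simp add: divide_right_mono)
  also have "\<dots> = 2 * (real N - card R) / N + \<gamma>" using N by (simp add: field_simps)
  also have "\<dots> \<le> 4 * (real N - card R) / N + \<gamma>"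
    using cR N by (simp add: divide_right_mono)
  also have "real N - card R = real (Min (f ` {..<N}))"
    using x0 cR by (simp add: f_def RR of_nat_diff)
  finally have b1: "entry_norm M2 \<le> 4 * real (Min (f ` {..<N})) / N + \<gamma>" .
  show ?thesis
    using part1 b1 b2 unfolding M1_def M2_def c_def t_def P_def f_def by simp
qed

end
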